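(* For $\alpha>0$ let $\mu_\alpha(x)=z_\alpha^{-1}(1+|x|^2)^{-(d+\alpha)/2}$ denote the generalized Cauchy density on $\mathbb R^d$. Let $\alpha_1,\alpha_2>0$ and $\alpha_{\min}=\min(\alpha_1,\alpha_2)$. Then there exist constants $0<c\le C<\infty$ such that for all $x\in\mathbb R^d$, $c\,\mu_{\alpha_{\min}}(x)\le(\mu_{\alpha_1}*\mu_{\alpha_2})(x)\le C\,\mu_{\alpha_{\min}}(x)$. Consequently, if $\mu_{\alpha_{\min}}$ satisfies a weighted Poincaré inequality with weight $\omega$ (e.g. $\omega(x)=\sqrt{1+|x|^2}$), then so does $\mu_{\alpha_1}*\mu_{\alpha_2}$, with constant at most $\frac Cc\,C_{P,\omega}(\mu_{\alpha_{\min}})$.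
   Context: $z_\alpha$ is the normalizing constant. A probability measure $\mu$ satisfies a weighted Poincaré inequality with weight $\omega\ge0$ and constant $C_{P,\omega}(\mu)$ if for all smooth $f$, $\mathrm{Var}_\mu(f)\le C_{P,\omega}(\mu)\int|\nabla f|^2\omega^2d\mu$. *)

theory Defs
  imports "HOL-Analysis.Analysis"
begin

definition cauchy_kernel :: "real \<Rightarrow> 'a::euclidean_space \<Rightarrow> real" where
  "cauchy_kernel \<alpha> x = (1 + (norm x)\<^sup>2) powr (- (real DIM('a) + \<alpha>) / 2)"

definition cauchy_const :: "real \<Rightarrow> 'a::euclidean_space itself \<Rightarrow> real" where
  "cauchy_const \<alpha> _ = (\<integral>x. cauchy_kernel \<alpha> (x::'a) \<partial>lborel)"

definition cauchy_density :: "real \<Rightarrow> 'a::euclidean_space \<Rightarrow> real" where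
  "cauchy_density \<alpha> x = cauchy_kernel \<alpha> x / cauchy_const \<alpha> TYPE('a)"

definition convolution :: "('a::euclidean_space \<Rightarrow> real) \<Rightarrow> ('a \<Rightarrow> real) \<Rightarrow> 'a \<Rightarrow> real" where
  "convolution f g x = (\<integral>y. f (x - y) * g y \<partial>lborel)"

text \<open>Smooth (C^infinity) real functions: differentiable everywhere, and every
  directional derivative is again smooth.\<close>
coinductive smooth_fun :: "('a::euclidean_space \<Rightarrow> real) \<Rightarrow> bool" where
  "(\<forall>x. f differentiable (at x)) \<Longrightarrow>
   (\<forall>v. smooth_fun (\<lambda>x. frechet_derivative f (at x) v)) \<Longrightarrow> smooth_fun f"

definition grad :: "('a::euclidean_space \<Rightarrow> real) \<Rightarrow> 'a \<Rightarrow> 'a" where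
  "grad f x = (\<Sum>b\<in>Basis. frechet_derivative f (at x) b *\<^sub>R b)"

definition variance_ext :: "'a measure \<Rightarrow> ('a \<Rightarrow> real) \<Rightarrow> ennreal" where
  "variance_ext M f =
     (if integrable M f then (\<integral>\<^sup>+x. ennreal ((f x - (\<integral>y. f y \<partial>M))\<^sup>2) \<partial>M) else \<infinity>)"

definition weighted_poincare ::
  "('a::euclidean_space \<Rightarrow> real) \<Rightarrow> ('a \<Rightarrow> real) \<Rightarrow> real \<Rightarrow> bool" where
  "weighted_poincare p w K \<longleftrightarrow>
     (\<forall>x. 0 \<le> w x) \<and>
     (\<forall>f. smooth_fun f \<longrightarrow>
        variance_ext (density lborel (\<lambda>x. ennreal (p x))) f
          \<le> ennreal K * (\<integral>\<^sup>+x. ennreal ((norm (grad f x))\<^sup>2 * (w x)\<^sup>2)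
                              \<partial>density lborel (\<lambda>x. ennreal (p x))))"

end

theory Submission
  imports Defs
begin

lemma oneD_fin:
  fixes s :: real assumes s: "s > 1/2"
  shows "(\<integral>\<^sup>+t. ennreal ((1 + t\<^sup>2) powr (-s)) \<partial>lborel) < \<infinity>"
proof -
  define h :: "real \<Rightarrow> real" where "h t = (if 1 \<le> t then t powr (- 2 * s) else 0)" for t
  have "((\<lambda>x. x powr (- 2 * s)) has_integral -(1 powr (- 2 * s+1)) / (- 2 * s+1)) {1::real..}"
    by (rule has_integral_powr_to_inf) (use s in auto)
  then have hI: "(h has_integral -(1 powr (- 2 * s+1)) / (- 2 * s+1)) UNIV"
    unfolding h_def using has_integral_restrict_UNIV[of "{1::real..}" "\<lambda>x. x powr (- 2 * s)"] by simp
  have hm[measurable]: "h \<in> borel_measurable borel"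
    unfolding h_def by measurable
  have hnn: "\<And>t. 0 \<le> h t" unfolding h_def by auto
  have hN: "(\<integral>\<^sup>+t. ennreal (h t) \<partial>lborel) = ennreal (-(1 powr (- 2 * s+1)) / (- 2 * s+1))"
    using nn_integral_has_integral_lborel[OF hm hnn hI] by simp
  have hN2: "(\<integral>\<^sup>+t. ennreal (h (-t)) \<partial>lborel) = (\<integral>\<^sup>+t. ennreal (h t) \<partial>lborel)"
    using nn_integral_real_affine[of "\<lambda>t. ennreal (h t)" "-1" 0] by simp
  have bound: "ennreal ((1 + t\<^sup>2) powr (-s)) \<le> ennreal (indicator {-1..1} t) + ennreal (h t) + ennreal (h (-t))" for t
  proof (cases "\<bar>t\<bar> \<le> 1")
    case True
    have "(1 + t\<^sup>2) powr (-s) \<le> 1"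
      using powr_mono2'[of "-s" 1 "1+t\<^sup>2"] s by simp
    then have "ennreal ((1 + t\<^sup>2) powr (-s)) \<le> ennreal (indicator {-1..1} t)"
      using True by (auto simp: indicator_def)
    then show ?thesis by (meson add_increasing2 le_add1 order_trans zero_le)
  next
    case False
    have a: "(1 + t\<^sup>2) powr (-s) \<le> (\<bar>t\<bar>\<^sup>2) powr (-s)"
      by (rule powr_mono2') (use s False in auto)
    also have "\<dots> = \<bar>t\<bar> powr (- 2 * s)"
    proof -
      have "\<bar>t\<bar>\<^sup>2 = \<bar>t\<bar> powr 2" using False by (simp add: powr_realpow)
      then show ?thesis by (simp only: powr_powr) simp
    qed
    also have "\<dots> = h t + h (-t)"
      using False by (auto simp: h_def)
    finally have "ennreal ((1 + t\<^sup>2) powr (-s)) \<le> ennreal (h t) + ennreal (h (-t))"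
      using hnn by (simp add: ennreal_plus[symmetric] del: ennreal_plus)
    then show ?thesis by (simp add: add.assoc add_increasing)
  qed
  have "(\<integral>\<^sup>+t. ennreal ((1 + t\<^sup>2) powr (-s)) \<partial>lborel)
      \<le> (\<integral>\<^sup>+t. ennreal (indicator {-1..1} t) + ennreal (h t) + ennreal (h (-t)) \<partial>lborel)"
    by (rule nn_integral_mono) (rule bound)
  also have "\<dots> = (\<integral>\<^sup>+t. ennreal (indicator {-1..1} (t::real)) \<partial>lborel) + (\<integral>\<^sup>+t. ennreal (h t) \<partial>lborel)
      + (\<integral>\<^sup>+t. ennreal (h (-t)) \<partial>lborel)"
  proof -
    have m2[measurable]: "(\<lambda>t. h (-t)) \<in> borel_measurable borel" by measurable
    have "(\<integral>\<^sup>+t. ennreal (indicator {-1..1} t) + ennreal (h t) + ennreal (h (-t)) \<partial>lborel) = 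
       (\<integral>\<^sup>+t. ennreal (indicator {-1..1} t) + ennreal (h t) \<partial>lborel) + (\<integral>\<^sup>+t. ennreal (h (-t)) \<partial>lborel)"
      by (rule nn_integral_add) auto
    moreover have "(\<integral>\<^sup>+t. ennreal (indicator {-1..1} t) + ennreal (h t) \<partial>lborel) = 
       (\<integral>\<^sup>+t. ennreal (indicator {-1..1} (t::real)) \<partial>lborel) + (\<integral>\<^sup>+t. ennreal (h t) \<partial>lborel)"
      using nn_integral_add[of "\<lambda>t. ennreal (indicator {-1..1::real} t)" lborel "\<lambda>t. ennreal (h t)"] by simp
    ultimately show ?thesis by simp
  qed
  also have "\<dots> < \<infinity>"
  proof -
    have "(\<integral>\<^sup>+t. ennreal (indicator {-1..1} (t::real)) \<partial>lborel) = 2"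
      by (simp add: ennreal_indicator)
    moreover have "(\<integral>\<^sup>+t. ennreal (h t) \<partial>lborel) < \<infinity>" using hN by simp
    ultimately show ?thesis using hN2 by simp
  qed
  finally show ?thesis .
qed

lemma kernel_meas[measurable]: "cauchy_kernel a \<in> borel_measurable borel"
  unfolding cauchy_kernel_def[abs_def] by measurable

lemma kernel_pos: "0 < cauchy_kernel a x"
proof -
  have "0 < 1 + (norm x)\<^sup>2" by (simp add: add_pos_nonneg)
  then show ?thesis unfolding cauchy_kernel_def by simp
qed

lemma kernel_le1: assumes "a > 0" shows "cauchy_kernel a (x::'a::euclidean_space) \<le> 1"
  unfolding cauchy_kernel_def
  using powr_mono2'[of "- (real DIM('a) + a) / 2" 1 "1 + (norm x)\<^sup>2"] assms by simp

lemma kernel_le_prod: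
  fixes x :: "'a::euclidean_space" assumes a: "a > 0"
  shows "cauchy_kernel a x \<le> (\<Prod>b\<in>Basis. (1 + (x\<bullet>b)\<^sup>2) powr (-((real DIM('a) + a)/(2*real DIM('a)))))"
proof -
  define d where "d = real DIM('a)"
  define s where "s = (d + a)/(2*d)"
  have d: "d \<ge> 1" unfolding d_def using DIM_positive[where 'a='a] by linarith
  have s: "s \<ge> 0" unfolding s_def using d a by simp
  have "(\<Prod>b\<in>Basis. (1 + (x\<bullet>b)\<^sup>2)) \<le> (\<Prod>b\<in>(Basis::'a set). (1 + (norm x)\<^sup>2))"
  proof (rule prod_mono)
    fix b :: 'a assume "b \<in> Basis"
    then have "\<bar>x\<bullet>b\<bar> \<le> norm x" by (rule Basis_le_norm)
    then have "\<bar>x\<bullet>b\<bar>\<^sup>2 \<le> (norm x)\<^sup>2" by (rule power_mono) simp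
    then show "0 \<le> 1 + (x\<bullet>b)\<^sup>2 \<and> 1 + (x\<bullet>b)\<^sup>2 \<le> 1 + (norm x)\<^sup>2" by simp
  qed
  then have P1: "(\<Prod>b\<in>Basis. (1 + (x\<bullet>b)\<^sup>2)) \<le> (1 + (norm x)\<^sup>2) ^ DIM('a)" by simp
  have Ppos: "0 < (\<Prod>b\<in>(Basis::'a set). (1 + (x\<bullet>b)\<^sup>2))"
    by (rule prod_pos) (auto intro: add_pos_nonneg)
  have e: "d * (-s) = - (d + a) / 2" unfolding s_def using d by (simp add: field_simps)
  have "cauchy_kernel a x = (1 + (norm x)\<^sup>2) powr (d * (-s))"
    by (simp only: e) (simp add: cauchy_kernel_def d_def)
  also have "\<dots> = ((1 + (norm x)\<^sup>2) ^ DIM('a)) powr (-s)"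
    by (simp add: powr_realpow[symmetric] powr_powr d_def add_pos_nonneg)
  also have "\<dots> \<le> (\<Prod>b\<in>Basis. (1 + (x\<bullet>b)\<^sup>2)) powr (-s)"
    by (rule powr_mono2') (use s Ppos P1 in auto)
  also have "\<dots> = (\<Prod>b\<in>Basis. (1 + (x\<bullet>b)\<^sup>2) powr (-s))"
    by (rule prod_powr_distrib)
  finally show ?thesis unfolding s_def d_def by simp
qed

lemma kernel_nn_fin:
  assumes a: "a > 0"
  shows "(\<integral>\<^sup>+x. ennreal (cauchy_kernel a (x::'a::euclidean_space)) \<partial>lborel) < \<infinity>"
proof -
  define s where "s = (real DIM('a) + a)/(2*real DIM('a))"
  have d: "real DIM('a) \<ge> 1" using DIM_positive[where 'a='a] by linarith
  have s: "s > 1/2" unfolding s_def using d a by (simp add: field_simps)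
  have "(\<integral>\<^sup>+x. ennreal (cauchy_kernel a (x::'a)) \<partial>lborel)
      \<le> (\<integral>\<^sup>+x. (\<Prod>b\<in>Basis. ennreal ((1 + ((x::'a)\<bullet>b)\<^sup>2) powr (-s))) \<partial>lborel)"
  proof (rule nn_integral_mono)
    fix x :: 'a
    have "cauchy_kernel a x \<le> (\<Prod>b\<in>Basis. (1 + (x\<bullet>b)\<^sup>2) powr (-s))"
      using kernel_le_prod[OF a, of x] unfolding s_def .
    then show "ennreal (cauchy_kernel a x) \<le> (\<Prod>b\<in>Basis. ennreal ((1 + (x\<bullet>b)\<^sup>2) powr (-s)))"
      by (subst prod_ennreal) (auto intro: ennreal_leI)
  qed
  also have "\<dots> = (\<Prod>b\<in>(Basis::'a set). (\<integral>\<^sup>+t. ennreal ((1 + t\<^sup>2) powr (-s)) \<partial>lborel))"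
    by (rule nn_integral_lborel_prod[where f="\<lambda>b t. ennreal ((1 + t\<^sup>2) powr (-s))"]) auto
  also have "\<dots> = (\<integral>\<^sup>+t. ennreal ((1 + t\<^sup>2) powr (-s)) \<partial>lborel) ^ DIM('a)"
    by simp
  also have "\<dots> < \<infinity>"
    using oneD_fin[OF s] by (simp add: power_less_top_ennreal)
  finally show ?thesis .
qed

lemma kernel_integrable:
  assumes a: "a > 0"
  shows "integrable lborel (cauchy_kernel a :: 'a::euclidean_space \<Rightarrow> real)"
proof (rule integrableI_nonneg)
  show "AE x in lborel. 0 \<le> cauchy_kernel a (x::'a)"
    by (rule AE_I2) (rule less_imp_le[OF kernel_pos])
qed (use kernel_nn_fin[OF a] in auto)

lemma const_pos:
  assumes a: "a > 0"
  shows "0 < cauchy_const a TYPE('a::euclidean_space)"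
proof -
  have "0 \<le> cauchy_const a TYPE('a)"
    unfolding cauchy_const_def by (rule integral_nonneg_AE) (auto intro: less_imp_le kernel_pos)
  moreover have "cauchy_const a TYPE('a) \<noteq> 0"
  proof
    assume "cauchy_const a TYPE('a) = 0"
    then have "AE x in lborel. cauchy_kernel a (x::'a) = 0"
      unfolding cauchy_const_def
      by (subst (asm) integral_nonneg_eq_0_iff_AE) (auto intro: less_imp_le kernel_pos kernel_integrable[OF a])
    moreover have "AE x in lborel. cauchy_kernel a (x::'a) = 0 \<longrightarrow> False"
      by (rule AE_I2) (use kernel_pos[of a] in \<open>metis less_irrefl\<close>)
    ultimately have "AE x in (lborel::'a measure). False" by (rule AE_mp[where Q="\<lambda>x. False"])
    then have "ae_filter (lborel::'a measure) = bot" using trivial_limit_def by blast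
    then show False by (simp add: ae_filter_eq_bot_iff)
  qed
  ultimately show ?thesis by linarith
qed

lemma peetre:
  fixes x y :: "'a::euclidean_space"
  shows "1 + (norm x)\<^sup>2 \<le> 2 * (1 + (norm (x - y))\<^sup>2) * (1 + (norm y)\<^sup>2)"
proof -
  have t: "norm x \<le> norm (x - y) + norm y" using norm_triangle_ineq[of "x - y" y] by simp
  have "(norm x)\<^sup>2 \<le> (norm (x - y) + norm y)\<^sup>2" by (rule power_mono[OF t]) simp
  also have "\<dots> \<le> 2 * (norm (x - y))\<^sup>2 + 2 * (norm y)\<^sup>2"
    by (smt (verit) sum_squares_bound power2_sum)
  finally have "(norm x)\<^sup>2 \<le> 2 * (norm (x - y))\<^sup>2 + 2 * (norm y)\<^sup>2" .
  moreover have "0 \<le> (norm (x - y))\<^sup>2 * (norm y)\<^sup>2" by simp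
  moreover have "2 * (1 + (norm (x - y))\<^sup>2) * (1 + (norm y)\<^sup>2) = 2 + 2*(norm (x - y))\<^sup>2 + 2*(norm y)\<^sup>2 + 2*((norm (x - y))\<^sup>2 * (norm y)\<^sup>2)"
    by (simp add: algebra_simps)
  ultimately show ?thesis by linarith
qed

lemma kernel_alt: "cauchy_kernel a (x::'a::euclidean_space) = (1 + (norm x)\<^sup>2) powr (- ((real DIM('a) + a) / 2))"
proof -
  have "- (real DIM('a) + a) / 2 = - ((real DIM('a) + a) / 2)" by (rule minus_divide_left[symmetric])
  then show ?thesis unfolding cauchy_kernel_def by metis
qed

lemma kernel_lower:
  fixes u v w :: "'a::euclidean_space"
  assumes a: "a > 0" and h: "1 + (norm u)\<^sup>2 \<le> 2 * (1 + (norm v)\<^sup>2) * (1 + (norm w)\<^sup>2)"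
  shows "2 powr (- ((real DIM('a) + a) / 2)) * cauchy_kernel a v * cauchy_kernel a w \<le> cauchy_kernel a u"
proof -
  define e where "e = - ((real DIM('a) + a) / 2)"
  have e: "e \<le> 0" unfolding e_def using a by simp
  have m: "(2 * (1 + (norm v)\<^sup>2) * (1 + (norm w)\<^sup>2)) powr e \<le> (1 + (norm u)\<^sup>2) powr e"
    by (rule powr_mono2'[OF e _ h]) (simp add: add_pos_nonneg)
  have eq: "(2 * (1 + (norm v)\<^sup>2) * (1 + (norm w)\<^sup>2)) powr e = 2 powr e * (1 + (norm v)\<^sup>2) powr e * (1 + (norm w)\<^sup>2) powr e"
    by (simp only: powr_mult)
  have k: "cauchy_kernel a u = (1 + (norm u)\<^sup>2) powr e" "cauchy_kernel a v = (1 + (norm v)\<^sup>2) powr e"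
     "cauchy_kernel a w = (1 + (norm w)\<^sup>2) powr e"
    by (simp_all only: kernel_alt e_def)
  have "2 powr e * cauchy_kernel a v * cauchy_kernel a w \<le> cauchy_kernel a u"
    using m unfolding eq k .
  then show ?thesis by (simp only: e_def)
qed

lemma kernel_upper:
  fixes u v :: "'a::euclidean_space"
  assumes a: "a > 0" and h: "1 + (norm v)\<^sup>2 \<le> 4 * (1 + (norm u)\<^sup>2)"
  shows "cauchy_kernel a u \<le> 4 powr ((real DIM('a) + a) / 2) * cauchy_kernel a v"
proof -
  define e where "e = - ((real DIM('a) + a) / 2)"
  have e: "e \<le> 0" unfolding e_def using a by simp
  have "cauchy_kernel a u \<le> ((1 + (norm v)\<^sup>2) / 4) powr e"
    unfolding kernel_alt e_def[symmetric] by (rule powr_mono2'[OF e]) (use h in \<open>auto simp: add_pos_nonneg\<close>)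
  also have "\<dots> = (1 + (norm v)\<^sup>2) powr e / 4 powr e"
    by (rule powr_divide)
  also have "\<dots> = 4 powr (-e) * cauchy_kernel a v"
    unfolding kernel_alt e_def[symmetric] by (simp add: powr_minus divide_inverse)
  finally show ?thesis unfolding e_def by simp
qed

lemma kernel_anti:
  assumes "a \<le> b" shows "cauchy_kernel b (x::'a::euclidean_space) \<le> cauchy_kernel a x"
  unfolding kernel_alt by (rule powr_mono) (use assms in auto)

lemma kernel_sym: "cauchy_kernel a (x - y) = cauchy_kernel a ((-x) + (y::'a::euclidean_space))"
  unfolding kernel_alt by (simp add: norm_minus_commute)

lemma transl_integrable:
  fixes g :: "'a::euclidean_space \<Rightarrow> real"
  assumes [measurable]: "g \<in> borel_measurable borel" and int: "integrable lborel g"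
  shows "integrable lborel (\<lambda>y. g (c + y))" and "(\<integral>y. g (c + y) \<partial>lborel) = (\<integral>y. g y \<partial>lborel)"
proof -
  have "integrable (distr lborel borel ((+) c)) g" using int by (simp add: lborel_distr_plus)
  then show "integrable lborel (\<lambda>y. g (c + y))" by (subst (asm) integrable_distr_eq) auto
  have "(\<integral>y. g y \<partial>lborel) = (\<integral>y. g y \<partial>(distr lborel borel ((+) c)))" by (simp add: lborel_distr_plus)
  also have "\<dots> = (\<integral>y. g (c + y) \<partial>lborel)" by (rule integral_distr) auto
  finally show "(\<integral>y. g (c + y) \<partial>lborel) = (\<integral>y. g y \<partial>lborel)" ..
qed

lemma transl_nn:
  fixes g :: "'a::euclidean_space \<Rightarrow> ennreal"
  assumes [measurable]: "g \<in> borel_measurable borel"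
  shows "(\<integral>\<^sup>+y. g (c + y) \<partial>lborel) = (\<integral>\<^sup>+y. g y \<partial>lborel)"
proof -
  have "(\<integral>\<^sup>+y. g y \<partial>lborel) = (\<integral>\<^sup>+y. g y \<partial>(distr lborel borel ((+) c)))" by (simp add: lborel_distr_plus)
  also have "\<dots> = (\<integral>\<^sup>+y. g (c + y) \<partial>lborel)" by (rule nn_integral_distr) auto
  finally show ?thesis ..
qed

lemma integral_pos:
  fixes f :: "'a::euclidean_space \<Rightarrow> real"
  assumes int: "integrable lborel f" and pos: "\<And>x. 0 < f x"
  shows "0 < (\<integral>x. f x \<partial>lborel)"
proof -
  have "0 \<le> (\<integral>x. f x \<partial>lborel)"
    by (rule integral_nonneg_AE) (auto intro: less_imp_le pos)
  moreover have "(\<integral>x. f x \<partial>lborel) \<noteq> 0"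
  proof
    assume "(\<integral>x. f x \<partial>lborel) = 0"
    then have "AE x in lborel. f x = 0"
      by (subst (asm) integral_nonneg_eq_0_iff_AE) (auto intro: less_imp_le pos int)
    moreover have "AE x in lborel. f x = 0 \<longrightarrow> False"
      by (rule AE_I2) (use pos in \<open>metis less_irrefl\<close>)
    ultimately have "AE x in (lborel::'a measure). False" by (rule AE_mp[where Q="\<lambda>x. False"])
    then have "ae_filter (lborel::'a measure) = bot" using trivial_limit_def by blast
    then show False by (simp add: ae_filter_eq_bot_iff)
  qed
  ultimately show ?thesis by linarith
qed

lemma dens_meas[measurable]: "cauchy_density a \<in> borel_measurable borel"
  unfolding cauchy_density_def[abs_def] by measurable

lemma prod_integrable:
  assumes a1: "a1 > 0" and a2: "a2 > 0"
  shows "integrable lborel (\<lambda>y. cauchy_kernel a1 (x - y) * cauchy_kernel a2 (y::'a::euclidean_space))"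
proof (rule Bochner_Integration.integrable_bound[OF kernel_integrable[OF a2]])
  show "(\<lambda>y. cauchy_kernel a1 (x - y) * cauchy_kernel a2 (y::'a)) \<in> borel_measurable lborel" by measurable
  show "AE y in lborel. norm (cauchy_kernel a1 (x - y) * cauchy_kernel a2 y) \<le> norm (cauchy_kernel a2 (y::'a))"
  proof (rule AE_I2)
    fix y :: 'a
    have "cauchy_kernel a1 (x - y) * cauchy_kernel a2 y \<le> 1 * cauchy_kernel a2 y"
      by (rule mult_right_mono[OF kernel_le1[OF a1]]) (rule less_imp_le[OF kernel_pos])
    then show "norm (cauchy_kernel a1 (x - y) * cauchy_kernel a2 y) \<le> norm (cauchy_kernel a2 y)"
      using kernel_pos[of a1 "x - y"] kernel_pos[of a2 y] by simp
  qed
qed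

lemma conv_eq:
  fixes x :: "'a::euclidean_space"
  shows "convolution (cauchy_density a1) (cauchy_density a2) x =
     (\<integral>y. cauchy_kernel a1 (x - y) * cauchy_kernel a2 y \<partial>lborel) / (cauchy_const a1 TYPE('a) * cauchy_const a2 TYPE('a::euclidean_space))"
proof -
  have "(\<lambda>y::'a. cauchy_density a1 (x - y) * cauchy_density a2 y) =
        (\<lambda>y. cauchy_kernel a1 (x - y) * cauchy_kernel a2 y / (cauchy_const a1 TYPE('a) * cauchy_const a2 TYPE('a)))"
    by (simp add: fun_eq_iff cauchy_density_def)
  then show ?thesis unfolding convolution_def by simp
qed

lemma I_upper:
  fixes x :: "'a::euclidean_space"
  assumes a1: "a1 > 0" and a2: "a2 > 0"
  shows "(\<integral>y. cauchy_kernel a1 (x - y) * cauchy_kernel a2 y \<partial>lborel)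
     \<le> (4 powr ((real DIM('a) + a1) / 2) * cauchy_const a2 TYPE('a) + 4 powr ((real DIM('a) + a2) / 2) * cauchy_const a1 TYPE('a))
        * cauchy_kernel (min a1 a2) x"
proof -
  define A where "A = 4 powr ((real DIM('a) + a1) / 2)"
  define B where "B = 4 powr ((real DIM('a) + a2) / 2)"
  have A: "A \<ge> 0" and B: "B \<ge> 0" unfolding A_def B_def by auto
  have pw: "cauchy_kernel a1 (x - y) * cauchy_kernel a2 y
      \<le> A * cauchy_kernel a1 x * cauchy_kernel a2 y + B * cauchy_kernel a2 x * cauchy_kernel a1 (-x + y)" for y
  proof -
    have k1: "0 < cauchy_kernel a1 (x - y)" "0 < cauchy_kernel a2 y" "0 < cauchy_kernel a1 x" "0 < cauchy_kernel a2 x"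
      by (auto intro: kernel_pos)
    have t: "norm x \<le> norm (x - y) + norm y" using norm_triangle_ineq[of "x - y" y] by simp
    show ?thesis
    proof (cases "norm x \<le> 2 * norm (x - y)")
      case True
      then have "(norm x)\<^sup>2 \<le> (2 * norm (x - y))\<^sup>2" by (rule power_mono) simp
      then have "1 + (norm x)\<^sup>2 \<le> 4 * (1 + (norm (x - y))\<^sup>2)" by (simp add: power_mult_distrib)
      then have "cauchy_kernel a1 (x - y) \<le> A * cauchy_kernel a1 x"
        unfolding A_def by (rule kernel_upper[OF a1])
      then have "cauchy_kernel a1 (x - y) * cauchy_kernel a2 y \<le> A * cauchy_kernel a1 x * cauchy_kernel a2 y"
        using k1 by (simp add: mult_right_mono)
      moreover have "0 \<le> B * cauchy_kernel a2 x * cauchy_kernel a1 (-x + y)"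
        using B k1 kernel_pos[of a1 "-x+y"] by simp
      ultimately show ?thesis by linarith
    next
      case False
      then have "norm x \<le> 2 * norm y" using t by linarith
      then have "(norm x)\<^sup>2 \<le> (2 * norm y)\<^sup>2" by (rule power_mono) simp
      then have "1 + (norm x)\<^sup>2 \<le> 4 * (1 + (norm y)\<^sup>2)" by (simp add: power_mult_distrib)
      then have "cauchy_kernel a2 y \<le> B * cauchy_kernel a2 x"
        unfolding B_def by (rule kernel_upper[OF a2])
      then have "cauchy_kernel a1 (x - y) * cauchy_kernel a2 y \<le> cauchy_kernel a1 (x - y) * (B * cauchy_kernel a2 x)"
        using k1 by (simp add: mult_left_mono)
      also have "\<dots> = B * cauchy_kernel a2 x * cauchy_kernel a1 (-x + y)"
        using kernel_sym[of a1 x y] by simp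
      finally have "cauchy_kernel a1 (x - y) * cauchy_kernel a2 y \<le> B * cauchy_kernel a2 x * cauchy_kernel a1 (-x + y)" .
      moreover have "0 \<le> A * cauchy_kernel a1 x * cauchy_kernel a2 y"
        using A k1 by simp
      ultimately show ?thesis by linarith
    qed
  qed
  have i1: "integrable lborel (\<lambda>y. A * cauchy_kernel a1 x * cauchy_kernel a2 (y::'a))"
    using kernel_integrable[OF a2, where 'a='a] by simp
  have i2': "integrable lborel (\<lambda>y. cauchy_kernel a1 (-x + (y::'a)))"
    by (rule transl_integrable(1)[OF kernel_meas kernel_integrable[OF a1]])
  have i2: "integrable lborel (\<lambda>y. B * cauchy_kernel a2 x * cauchy_kernel a1 (-x + (y::'a)))"
    using i2' by simp
  have "(\<integral>y. cauchy_kernel a1 (x - y) * cauchy_kernel a2 y \<partial>lborel)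
      \<le> (\<integral>y. A * cauchy_kernel a1 x * cauchy_kernel a2 y + B * cauchy_kernel a2 x * cauchy_kernel a1 (-x + y) \<partial>lborel)"
    by (rule integral_mono[OF prod_integrable[OF a1 a2] Bochner_Integration.integrable_add[OF i1 i2] pw])
  also have "\<dots> = A * cauchy_kernel a1 x * cauchy_const a2 TYPE('a) + B * cauchy_kernel a2 x * cauchy_const a1 TYPE('a)"
  proof -
    have tr: "(\<integral>y. cauchy_kernel a1 (y - x) \<partial>lborel) = cauchy_const a1 TYPE('a)"
      using transl_integrable(2)[OF kernel_meas kernel_integrable[OF a1, where 'a='a], of "-x"]
      by (simp add: cauchy_const_def)
    show ?thesis
      using i1 i2 kernel_integrable[OF a2, where 'a='a] i2'
      by (simp add: tr) (simp add: cauchy_const_def)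
  qed
  also have "\<dots> \<le> A * cauchy_kernel (min a1 a2) x * cauchy_const a2 TYPE('a) + B * cauchy_kernel (min a1 a2) x * cauchy_const a1 TYPE('a)"
  proof -
    have "cauchy_kernel a1 x \<le> cauchy_kernel (min a1 a2) x" "cauchy_kernel a2 x \<le> cauchy_kernel (min a1 a2) x"
      by (auto intro: kernel_anti)
    moreover have "0 < cauchy_const a1 TYPE('a)" "0 < cauchy_const a2 TYPE('a)"
      using const_pos a1 a2 by auto
    ultimately show ?thesis using A B
      by (intro add_mono mult_right_mono mult_left_mono) auto
  qed
  also have "\<dots> = (A * cauchy_const a2 TYPE('a) + B * cauchy_const a1 TYPE('a)) * cauchy_kernel (min a1 a2) x"
    by (simp add: algebra_simps)
  finally show ?thesis unfolding A_def B_def .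
qed

lemma kk_integrable:
  assumes a1: "a1 > 0" and a2: "a2 > 0"
  shows "integrable lborel (\<lambda>y. cauchy_kernel a1 y * cauchy_kernel a2 (y::'a::euclidean_space))"
proof -
  have "(\<lambda>y::'a. cauchy_kernel a1 (0 - y) * cauchy_kernel a2 y) = (\<lambda>y. cauchy_kernel a1 y * cauchy_kernel a2 y)"
    by (simp add: kernel_alt)
  then show ?thesis using prod_integrable[OF a1 a2, of "0::'a"] by simp
qed

lemma I_lower:
  fixes x :: "'a::euclidean_space"
  assumes a1: "a1 > 0" and a2: "a2 > 0"
  shows "min (2 powr (- ((real DIM('a) + a1) / 2))) (2 powr (- ((real DIM('a) + a2) / 2)))
           * (\<integral>y. cauchy_kernel a1 y * cauchy_kernel a2 (y::'a) \<partial>lborel) * cauchy_kernel (min a1 a2) x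
     \<le> (\<integral>y. cauchy_kernel a1 (x - y) * cauchy_kernel a2 y \<partial>lborel)"
proof -
  define W where "W = (\<integral>y. cauchy_kernel a1 y * cauchy_kernel a2 (y::'a) \<partial>lborel)"
  define m where "m = min (2 powr (- ((real DIM('a) + a1) / 2))) (2 powr (- ((real DIM('a) + a2) / 2)))"
  have Wpos: "W > 0" unfolding W_def
    by (rule integral_pos[OF kk_integrable[OF a1 a2]]) (simp add: kernel_pos)
  have kpos: "\<And>a z. 0 < cauchy_kernel a (z::'a)" by (rule kernel_pos)
  show ?thesis
  proof (cases "a1 \<le> a2")
    case True
    then have mn: "min a1 a2 = a1" by simp
    define c1 where "c1 = 2 powr (- ((real DIM('a) + a1) / 2))"
    have pw: "c1 * cauchy_kernel a1 x * (cauchy_kernel a1 y * cauchy_kernel a2 y)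
        \<le> cauchy_kernel a1 (x - y) * cauchy_kernel a2 y" for y :: 'a
    proof -
      have "1 + (norm (x - y))\<^sup>2 \<le> 2 * (1 + (norm x)\<^sup>2) * (1 + (norm y)\<^sup>2)"
        using peetre[of "x - y" "-y"] by simp
      then have "c1 * cauchy_kernel a1 x * cauchy_kernel a1 y \<le> cauchy_kernel a1 (x - y)"
        unfolding c1_def by (rule kernel_lower[OF a1])
      then have "c1 * cauchy_kernel a1 x * cauchy_kernel a1 y * cauchy_kernel a2 y \<le> cauchy_kernel a1 (x - y) * cauchy_kernel a2 y"
        by (rule mult_right_mono) (rule less_imp_le[OF kpos])
      then show ?thesis by (simp add: mult.assoc)
    qed
    have "c1 * cauchy_kernel a1 x * W = (\<integral>y. c1 * cauchy_kernel a1 x * (cauchy_kernel a1 y * cauchy_kernel a2 (y::'a)) \<partial>lborel)"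
      unfolding W_def by simp
    also have "\<dots> \<le> (\<integral>y. cauchy_kernel a1 (x - y) * cauchy_kernel a2 y \<partial>lborel)"
      by (rule integral_mono[OF _ prod_integrable[OF a1 a2] pw]) (use kk_integrable[OF a1 a2, where 'a='a] in simp)
    finally have "c1 * cauchy_kernel a1 x * W \<le> (\<integral>y. cauchy_kernel a1 (x - y) * cauchy_kernel a2 y \<partial>lborel)" .
    moreover have "m * W * cauchy_kernel (min a1 a2) x \<le> c1 * cauchy_kernel a1 x * W"
      unfolding mn m_def c1_def using Wpos kpos[of a1 x]
      by (simp add: mult_right_mono mult.commute mult.left_commute)
    ultimately show ?thesis unfolding m_def W_def by linarith
  next
    case False
    then have mn: "min a1 a2 = a2" by simp
    define c2 where "c2 = 2 powr (- ((real DIM('a) + a2) / 2))"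
    have pw: "c2 * cauchy_kernel a2 x * (cauchy_kernel a1 (-x + y) * cauchy_kernel a2 (-x + y))
        \<le> cauchy_kernel a1 (x - y) * cauchy_kernel a2 y" for y :: 'a
    proof -
      have "1 + (norm y)\<^sup>2 \<le> 2 * (1 + (norm x)\<^sup>2) * (1 + (norm (x - y))\<^sup>2)"
        using peetre[of y x] by (simp add: norm_minus_commute algebra_simps)
      then have "c2 * cauchy_kernel a2 x * cauchy_kernel a2 (x - y) \<le> cauchy_kernel a2 y"
        unfolding c2_def by (rule kernel_lower[OF a2])
      then have "cauchy_kernel a1 (x - y) * (c2 * cauchy_kernel a2 x * cauchy_kernel a2 (x - y)) \<le> cauchy_kernel a1 (x - y) * cauchy_kernel a2 y"
        by (rule mult_left_mono) (rule less_imp_le[OF kpos])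
      then show ?thesis using kernel_sym[of a1 x y] kernel_sym[of a2 x y] by (simp add: mult_ac)
    qed
    have tr: "integrable lborel (\<lambda>y. cauchy_kernel a1 (-x + y) * cauchy_kernel a2 (-x + (y::'a)))"
             "(\<integral>y. cauchy_kernel a1 (-x + y) * cauchy_kernel a2 (-x + (y::'a)) \<partial>lborel) = W"
      unfolding W_def
      using transl_integrable[where g="\<lambda>y. cauchy_kernel a1 y * cauchy_kernel a2 (y::'a)", OF _ kk_integrable[OF a1 a2], of "-x"]
      by auto
    have "c2 * cauchy_kernel a2 x * W = (\<integral>y. c2 * cauchy_kernel a2 x * (cauchy_kernel a1 (-x + y) * cauchy_kernel a2 (-x + y)) \<partial>lborel)"
      using tr by simp
    also have "\<dots> \<le> (\<integral>y. cauchy_kernel a1 (x - y) * cauchy_kernel a2 y \<partial>lborel)"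
      by (rule integral_mono[OF _ prod_integrable[OF a1 a2] pw]) (use tr in simp)
    finally have "c2 * cauchy_kernel a2 x * W \<le> (\<integral>y. cauchy_kernel a1 (x - y) * cauchy_kernel a2 y \<partial>lborel)" .
    moreover have "m * W * cauchy_kernel (min a1 a2) x \<le> c2 * cauchy_kernel a2 x * W"
      unfolding mn m_def c2_def using Wpos kpos[of a2 x]
      by (simp add: mult_right_mono mult.commute mult.left_commute)
    ultimately show ?thesis unfolding m_def W_def by linarith
  qed
qed

lemma nn_scaled_le:
  fixes M N :: "'a measure" and c d :: ennreal
  assumes sets: "sets M = sets N" and le: "\<And>A. A \<in> sets M \<Longrightarrow> c * emeasure M A \<le> d * emeasure N A"
  shows "c * nn_integral M f \<le> d * nn_integral N f"
proof -
  have sp: "space M = space N" using sets by (rule sets_eq_imp_space_eq)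
  have simp_eq: "simple_function M g = simple_function N g" for g
    using simple_function_cong_algebra[OF sets sp] by metis
  have "c * nn_integral M f = (SUP g\<in>{g. simple_function M g \<and> g \<le> f}. c * integral\<^sup>S M g)"
    unfolding nn_integral_def by (rule SUP_mult_left_ennreal)
  also have "\<dots> \<le> (SUP g\<in>{g. simple_function N g \<and> g \<le> f}. d * integral\<^sup>S N g)"
  proof (rule SUP_mono)
    fix g assume g: "g \<in> {g. simple_function M g \<and> g \<le> f}"
    show "\<exists>m\<in>{g. simple_function N g \<and> g \<le> f}. c * integral\<^sup>S M g \<le> d * integral\<^sup>S N m"
    proof (intro bexI[of _ g])
      show "c * integral\<^sup>S M g \<le> d * integral\<^sup>S N g"
        unfolding simple_integral_def sp sum_distrib_left
      proof (rule sum_mono)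
        fix x assume "x \<in> g ` space N"
        have "g -` {x} \<inter> space M \<in> sets M" using g by (auto intro: simple_functionD(2))
        then have "c * emeasure M (g -` {x} \<inter> space N) \<le> d * emeasure N (g -` {x} \<inter> space N)"
          using le sp by auto
        then have "x * (c * emeasure M (g -` {x} \<inter> space N)) \<le> x * (d * emeasure N (g -` {x} \<inter> space N))"
          by (rule mult_left_mono) simp
        then show "c * (x * emeasure M (g -` {x} \<inter> space N)) \<le> d * (x * emeasure N (g -` {x} \<inter> space N))"
          by (simp add: mult.left_commute)
      qed
      show "g \<in> {g. simple_function N g \<and> g \<le> f}" using g simp_eq by auto
    qed
  qed
  also have "\<dots> = d * nn_integral N f"
    unfolding nn_integral_def by (rule SUP_mult_left_ennreal[symmetric])
  finally show ?thesis .
qed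

lemma density_measure_le:
  fixes p q :: "'a::euclidean_space \<Rightarrow> real"
  assumes [measurable]: "p \<in> borel_measurable borel" "q \<in> borel_measurable borel"
    and qnn: "\<And>x. 0 \<le> q x" and cd: "\<And>x. c * q x \<le> d * p x" and c: "0 \<le> c" and d: "0 \<le> d"
    and A: "A \<in> sets (density lborel (\<lambda>x. ennreal (q x)))"
  shows "ennreal c * emeasure (density lborel (\<lambda>x. ennreal (q x))) A \<le> ennreal d * emeasure (density lborel (\<lambda>x. ennreal (p x))) A"
proof -
  have A': "A \<in> sets lborel" using A by simp
  have "ennreal c * emeasure (density lborel (\<lambda>x. ennreal (q x))) A = (\<integral>\<^sup>+x. ennreal c * (ennreal (q x) * indicator A x) \<partial>lborel)"
    using A' by (simp add: emeasure_density nn_integral_cmult)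
  also have "\<dots> \<le> (\<integral>\<^sup>+x. ennreal d * (ennreal (p x) * indicator A x) \<partial>lborel)"
  proof (rule nn_integral_mono)
    fix x
    have "ennreal c * ennreal (q x) = ennreal (c * q x)" using c by (simp add: ennreal_mult')
    also have "\<dots> \<le> ennreal (d * p x)" using cd[of x] by (rule ennreal_leI)
    also have "\<dots> = ennreal d * ennreal (p x)" using d by (simp add: ennreal_mult')
    finally have "ennreal c * ennreal (q x) \<le> ennreal d * ennreal (p x)" .
    then show "ennreal c * (ennreal (q x) * indicator A x) \<le> ennreal d * (ennreal (p x) * indicator A x)"
      by (auto simp: indicator_def)
  qed
  also have "\<dots> = ennreal d * emeasure (density lborel (\<lambda>x. ennreal (p x))) A"
    using A' by (simp add: emeasure_density nn_integral_cmult)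
  finally show ?thesis .
qed

lemma var_min:
  fixes f :: "'a \<Rightarrow> real"
  assumes sp1: "emeasure M (space M) = 1" and int: "integrable M f"
  shows "(\<integral>\<^sup>+x. ennreal ((f x - (\<integral>y. f y \<partial>M))\<^sup>2) \<partial>M) \<le> (\<integral>\<^sup>+x. ennreal ((f x - a)\<^sup>2) \<partial>M)"
proof (cases "(\<integral>\<^sup>+x. ennreal ((f x - a)\<^sup>2) \<partial>M) = \<infinity>")
  case True then show ?thesis by simp
next
  case False
  interpret finite_measure M by (rule finite_measureI) (simp add: sp1)
  have ms1: "measure M (space M) = 1" using sp1 by (simp add: measure_def)
  define m where "m = (\<integral>y. f y \<partial>M)"
  have fm[measurable]: "f \<in> borel_measurable M" using int by auto
  have ia: "integrable M (\<lambda>x. (f x - a)\<^sup>2)"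
    by (rule integrableI_nonneg) (use False in \<open>auto simp: top.not_eq_extremum\<close>)
  have ifa: "integrable M (\<lambda>x. f x - a)" using int by auto
  have eq: "\<And>x. (f x - m)\<^sup>2 = (f x - a)\<^sup>2 + (2 * (a - m) * (f x - a) + (a - m)\<^sup>2)"
    by (simp add: power2_eq_square algebra_simps)
  have i2: "integrable M (\<lambda>x. 2 * (a - m) * (f x - a))" using ifa by auto
  have im: "integrable M (\<lambda>x. (f x - m)\<^sup>2)" unfolding eq using ia i2 by auto
  have ifa': "(\<integral>x. f x - a \<partial>M) = m - a" using int ms1 by (simp add: m_def)
  have "(\<integral>x. (f x - m)\<^sup>2 \<partial>M) = (\<integral>x. (f x - a)\<^sup>2 \<partial>M) + (2 * (a - m) * (m - a) + (a - m)\<^sup>2)"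
    unfolding eq using ia i2 ifa ifa' ms1 by simp
  also have "\<dots> \<le> (\<integral>x. (f x - a)\<^sup>2 \<partial>M)"
  proof -
    have "2 * (a - m) * (m - a) + (a - m)\<^sup>2 = - ((a - m)\<^sup>2)" by (simp add: power2_eq_square algebra_simps)
    then show ?thesis using zero_le_power2[of "a - m"] by linarith
  qed
  finally have le: "(\<integral>x. (f x - m)\<^sup>2 \<partial>M) \<le> (\<integral>x. (f x - a)\<^sup>2 \<partial>M)" .
  have "(\<integral>\<^sup>+x. ennreal ((f x - m)\<^sup>2) \<partial>M) = ennreal (\<integral>x. (f x - m)\<^sup>2 \<partial>M)"
    by (rule nn_integral_eq_integral[OF im]) simp
  also have "\<dots> \<le> ennreal (\<integral>x. (f x - a)\<^sup>2 \<partial>M)" using le by (rule ennreal_leI)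
  also have "\<dots> = (\<integral>\<^sup>+x. ennreal ((f x - a)\<^sup>2) \<partial>M)"
    by (rule nn_integral_eq_integral[OF ia, symmetric]) simp
  finally show ?thesis unfolding m_def .
qed

lemma wp_transfer:
  fixes p q :: "'a::euclidean_space \<Rightarrow> real"
  assumes pm[measurable]: "p \<in> borel_measurable borel" and qm[measurable]: "q \<in> borel_measurable borel"
    and qnn: "\<And>x. 0 \<le> q x" and c: "0 < c" and cC: "c \<le> C"
    and lo: "\<And>x. c * q x \<le> p x" and up: "\<And>x. p x \<le> C * q x"
    and p1: "(\<integral>\<^sup>+x. ennreal (p x) \<partial>lborel) = 1"
    and wp: "weighted_poincare q w K"
  shows "weighted_poincare p w (C / c * K)"
proof -
  define P where "P = density lborel (\<lambda>x. ennreal (p x))"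
  define Q where "Q = density lborel (\<lambda>x. ennreal (q x))"
  have Cpos: "0 < C" using c cC by linarith
  have pnn: "0 \<le> p x" for x using lo[of x] qnn[of x] c by (smt (verit) mult_nonneg_nonneg)
  have sPQ: "sets Q = sets P" unfolding P_def Q_def by simp
  have LOW: "ennreal c * nn_integral Q g \<le> ennreal 1 * nn_integral P g" for g
  proof (rule nn_scaled_le[OF sPQ])
    fix A assume A: "A \<in> sets Q"
    show "ennreal c * emeasure Q A \<le> ennreal 1 * emeasure P A"
      unfolding P_def Q_def by (rule density_measure_le[OF pm qm qnn _ _ _ A[unfolded Q_def]]) (use lo c in auto)
  qed
  have UP: "ennreal 1 * nn_integral P g \<le> ennreal C * nn_integral Q g" for g
  proof (rule nn_scaled_le[OF sPQ[symmetric]])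
    fix A assume A: "A \<in> sets P"
    show "ennreal 1 * emeasure P A \<le> ennreal C * emeasure Q A"
      unfolding P_def Q_def by (rule density_measure_le[OF qm pm pnn _ _ _ A[unfolded P_def]]) (use up Cpos in auto)
  qed
  have sp1: "emeasure P (space P) = 1"
    unfolding P_def using p1 by (simp add: emeasure_density)
  have wnn: "\<forall>x. 0 \<le> w x" and H: "\<And>f. smooth_fun f \<Longrightarrow>
        variance_ext Q f \<le> ennreal K * (\<integral>\<^sup>+x. ennreal ((norm (grad f x))\<^sup>2 * (w x)\<^sup>2) \<partial>Q)"
    using wp unfolding weighted_poincare_def Q_def by auto
  have meas_eq: "g \<in> borel_measurable Q \<longleftrightarrow> g \<in> borel_measurable P" for g :: "'a \<Rightarrow> real"
    using measurable_cong_sets[OF sPQ refl] by blast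
  have intPQ: "integrable Q f" if "integrable P f" for f :: "'a \<Rightarrow> real"
  proof -
    have m: "f \<in> borel_measurable P" and b: "(\<integral>\<^sup>+x. ennreal (norm (f x)) \<partial>P) < \<infinity>"
      using that by (auto simp: integrable_iff_bounded)
    have "ennreal c * (\<integral>\<^sup>+x. ennreal (norm (f x)) \<partial>Q) < \<infinity>"
      using LOW[of "\<lambda>x. ennreal (norm (f x))"] b by simp
    then have "(\<integral>\<^sup>+x. ennreal (norm (f x)) \<partial>Q) < \<infinity>"
      using c by (auto simp: ennreal_mult_less_top top.not_eq_extremum)
    then show ?thesis using m meas_eq by (auto simp: integrable_iff_bounded)
  qed
  have intQP: "integrable P f" if "integrable Q f" for f :: "'a \<Rightarrow> real"
  proof -
    have m: "f \<in> borel_measurable Q" and b: "(\<integral>\<^sup>+x. ennreal (norm (f x)) \<partial>Q) < \<infinity>"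
      using that by (auto simp: integrable_iff_bounded)
    have "ennreal C * (\<integral>\<^sup>+x. ennreal (norm (f x)) \<partial>Q) < \<infinity>"
      using b by (simp add: ennreal_mult_less_top)
    then have "(\<integral>\<^sup>+x. ennreal (norm (f x)) \<partial>P) < \<infinity>"
      using UP[of "\<lambda>x. ennreal (norm (f x))"] by simp
    then show ?thesis using m meas_eq by (auto simp: integrable_iff_bounded)
  qed
  show ?thesis
    unfolding weighted_poincare_def P_def[symmetric]
  proof (intro conjI allI impI)
    show "0 \<le> w x" for x using wnn by auto
    fix f :: "'a \<Rightarrow> real" assume sf: "smooth_fun f"
    define G where "G = (\<integral>\<^sup>+x. ennreal ((norm (grad f x))\<^sup>2 * (w x)\<^sup>2) \<partial>Q)"
    define GP where "GP = (\<integral>\<^sup>+x. ennreal ((norm (grad f x))\<^sup>2 * (w x)\<^sup>2) \<partial>P)"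
    have HG: "variance_ext Q f \<le> ennreal K * G" using H[OF sf] unfolding G_def .
    have LG: "ennreal c * G \<le> GP" using LOW unfolding G_def GP_def by simp
    show "variance_ext P f \<le> ennreal (C / c * K) * GP"
    proof (cases "integrable P f")
      case True
      then have iQ: "integrable Q f" by (rule intPQ)
      have "variance_ext P f = (\<integral>\<^sup>+x. ennreal ((f x - (\<integral>y. f y \<partial>P))\<^sup>2) \<partial>P)"
        using True unfolding variance_ext_def by simp
      also have "\<dots> \<le> (\<integral>\<^sup>+x. ennreal ((f x - (\<integral>y. f y \<partial>Q))\<^sup>2) \<partial>P)"
        by (rule var_min[OF sp1 True])
      also have "\<dots> \<le> ennreal C * (\<integral>\<^sup>+x. ennreal ((f x - (\<integral>y. f y \<partial>Q))\<^sup>2) \<partial>Q)"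
        using UP by simp
      also have "\<dots> = ennreal C * variance_ext Q f"
        using iQ unfolding variance_ext_def by simp
      also have "\<dots> \<le> ennreal C * (ennreal K * G)"
        using HG by (rule mult_left_mono) simp
      also have "\<dots> \<le> ennreal (C / c * K) * GP"
      proof (cases "K \<le> 0")
        case True
        then have "ennreal K = 0" by (simp add: ennreal_eq_0_iff)
        then show ?thesis by simp
      next
        case False
        have "ennreal C * (ennreal K * G) = ennreal (C / c * K) * (ennreal c * G)"
        proof -
          have e1: "ennreal (C / c * K) * ennreal c = ennreal (C / c * K * c)"
            by (rule ennreal_mult''[symmetric]) (use c in simp)
          have e2: "C / c * K * c = C * K" using c by simp
          have e3: "ennreal (C * K) = ennreal C * ennreal K" by (rule ennreal_mult') (use Cpos in simp)
          have "ennreal (C / c * K) * (ennreal c * G) = (ennreal (C / c * K) * ennreal c) * G"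
            by (simp only: mult.assoc)
          also have "\<dots> = ennreal C * ennreal K * G" by (simp only: e1 e2 e3)
          finally show ?thesis by (simp only: mult.assoc)
        qed
        also have "\<dots> \<le> ennreal (C / c * K) * GP"
          using LG by (rule mult_left_mono) simp
        finally show ?thesis .
      qed
      finally show ?thesis .
    next
      case False
      then have nQ: "\<not> integrable Q f" using intQP by blast
      then have "\<infinity> \<le> ennreal K * G" using HG unfolding variance_ext_def by simp
      then have "ennreal K * G = \<infinity>" by (simp add: top_unique)
      then have G: "G = \<infinity>" and K: "K > 0"
        by (auto simp: ennreal_mult_eq_top_iff ennreal_eq_0_iff)
      have "ennreal c * G = \<infinity>" using G c by (simp add: ennreal_mult_eq_top_iff)
      then have "GP = \<infinity>" using LG by (simp add: top_unique)
      moreover have "C / c * K > 0" using c Cpos K by simp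
      ultimately have "ennreal (C / c * K) * GP = \<infinity>" using c Cpos K by (simp add: ennreal_mult_eq_top_iff)
      then show ?thesis by simp
    qed
  qed
qed

lemma dens_pos: assumes a: "a > 0" shows "0 < cauchy_density a (x::'a::euclidean_space)"
  unfolding cauchy_density_def using kernel_pos[of a x] const_pos[OF a, where 'a='a] by (simp add: divide_pos_pos)

lemma dens_integrable: "a > 0 \<Longrightarrow> integrable lborel (cauchy_density a :: 'a::euclidean_space \<Rightarrow> real)"
  unfolding cauchy_density_def[abs_def] using kernel_integrable by auto

lemma dens_nn_one:
  assumes a: "a > 0"
  shows "(\<integral>\<^sup>+x. ennreal (cauchy_density a (x::'a::euclidean_space)) \<partial>lborel) = 1"
proof -
  have "(\<integral>\<^sup>+x. ennreal (cauchy_density a (x::'a)) \<partial>lborel) = ennreal (\<integral>x. cauchy_density a (x::'a) \<partial>lborel)"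
    by (rule nn_integral_eq_integral[OF dens_integrable[OF a]]) (simp add: less_imp_le[OF dens_pos[OF a]])
  also have "(\<integral>x. cauchy_density a (x::'a) \<partial>lborel) = 1"
    unfolding cauchy_density_def using const_pos[OF a, where 'a='a] by (simp add: cauchy_const_def)
  finally show ?thesis by simp
qed

lemma conv_F_meas[measurable]:
  "(\<lambda>(x, y). cauchy_density a1 (x - y) * cauchy_density a2 (y::'a::euclidean_space)) \<in> borel_measurable (lborel \<Otimes>\<^sub>M lborel)"
  by measurable

lemma conv_meas[measurable]:
  "convolution (cauchy_density a1) (cauchy_density a2) \<in> borel_measurable (borel :: 'a::euclidean_space measure)"
proof -
  have "(\<lambda>x. \<integral>y. cauchy_density a1 (x - y) * cauchy_density a2 (y::'a) \<partial>lborel) \<in> borel_measurable (lborel :: 'a measure)"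
    by (rule lborel.borel_measurable_lebesgue_integral) (rule conv_F_meas)
  then show ?thesis unfolding convolution_def[abs_def] by simp
qed

lemma dd_integrable:
  assumes a1: "a1 > 0" and a2: "a2 > 0"
  shows "integrable lborel (\<lambda>y. cauchy_density a1 (x - y) * cauchy_density a2 (y::'a::euclidean_space))"
proof -
  have "(\<lambda>y. cauchy_density a1 (x - y) * cauchy_density a2 (y::'a)) =
        (\<lambda>y. cauchy_kernel a1 (x - y) * cauchy_kernel a2 y / (cauchy_const a1 TYPE('a) * cauchy_const a2 TYPE('a)))"
    by (simp add: fun_eq_iff cauchy_density_def)
  then show ?thesis using prod_integrable[OF a1 a2, of x] by simp
qed

lemma conv_nn_one:
  assumes a1: "a1 > 0" and a2: "a2 > 0"
  shows "(\<integral>\<^sup>+x. ennreal (convolution (cauchy_density a1) (cauchy_density a2) (x::'a::euclidean_space)) \<partial>lborel) = 1"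
proof -
  have dpos: "\<And>a z. a > 0 \<Longrightarrow> 0 \<le> cauchy_density a (z::'a)" by (rule less_imp_le[OF dens_pos])
  have "(\<integral>\<^sup>+x. ennreal (convolution (cauchy_density a1) (cauchy_density a2) (x::'a)) \<partial>lborel)
      = (\<integral>\<^sup>+x. (\<integral>\<^sup>+y. ennreal (cauchy_density a1 (x - y) * cauchy_density a2 (y::'a)) \<partial>lborel) \<partial>lborel)"
  proof (rule nn_integral_cong)
    fix x :: 'a
    show "ennreal (convolution (cauchy_density a1) (cauchy_density a2) x) =
       (\<integral>\<^sup>+y. ennreal (cauchy_density a1 (x - y) * cauchy_density a2 y) \<partial>lborel)"
      unfolding convolution_def
      by (rule nn_integral_eq_integral[OF dd_integrable[OF a1 a2], symmetric]) (simp add: dpos a1 a2)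
  qed
  also have "\<dots> = (\<integral>\<^sup>+y. (\<integral>\<^sup>+x. ennreal (cauchy_density a1 (x - y) * cauchy_density a2 (y::'a)) \<partial>lborel) \<partial>lborel)"
    by (rule lborel_pair.Fubini'[symmetric]) measurable
  also have "\<dots> = (\<integral>\<^sup>+y. ennreal (cauchy_density a2 (y::'a)) \<partial>lborel)"
  proof (rule nn_integral_cong)
    fix y :: 'a
    have "(\<integral>\<^sup>+x. ennreal (cauchy_density a1 (x - y) * cauchy_density a2 y) \<partial>lborel)
        = (\<integral>\<^sup>+x. ennreal (cauchy_density a1 (-y + x)) * ennreal (cauchy_density a2 y) \<partial>lborel)"
      by (rule nn_integral_cong) (simp add: ennreal_mult' dpos a1 a2)
    also have "\<dots> = (\<integral>\<^sup>+x. ennreal (cauchy_density a1 (-y + x)) \<partial>lborel) * ennreal (cauchy_density a2 y)"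
      by (rule nn_integral_multc) measurable
    also have "(\<integral>\<^sup>+x. ennreal (cauchy_density a1 (-y + x)) \<partial>lborel) = (\<integral>\<^sup>+x. ennreal (cauchy_density a1 (x::'a)) \<partial>lborel)"
      by (rule transl_nn[where g="\<lambda>x. ennreal (cauchy_density a1 x)"]) measurable
    also have "\<dots> = 1" by (rule dens_nn_one[OF a1])
    finally show "(\<integral>\<^sup>+x. ennreal (cauchy_density a1 (x - y) * cauchy_density a2 y) \<partial>lborel) = ennreal (cauchy_density a2 y)"
      by simp
  qed
  also have "\<dots> = 1" by (rule dens_nn_one[OF a2])
  finally show ?thesis .
qed

lemma conv_bounds:
  assumes a1: "a1 > 0" and a2: "a2 > 0"
  shows "\<exists>c C. 0 < c \<and> (\<forall>x::'a::euclidean_space.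
        c * cauchy_density (min a1 a2) x \<le> convolution (cauchy_density a1) (cauchy_density a2) x
      \<and> convolution (cauchy_density a1) (cauchy_density a2) x \<le> C * cauchy_density (min a1 a2) x)"
proof -
  define Z1 where "Z1 = cauchy_const a1 TYPE('a)"
  define Z2 where "Z2 = cauchy_const a2 TYPE('a)"
  define Zm where "Zm = cauchy_const (min a1 a2) TYPE('a)"
  define W where "W = (\<integral>y. cauchy_kernel a1 y * cauchy_kernel a2 (y::'a) \<partial>lborel)"
  define m where "m = min (2 powr (- ((real DIM('a) + a1) / 2))) (2 powr (- ((real DIM('a) + a2) / 2)))"
  define C0 where "C0 = 4 powr ((real DIM('a) + a1) / 2) * Z2 + 4 powr ((real DIM('a) + a2) / 2) * Z1"
  have am: "min a1 a2 > 0" using a1 a2 by simp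
  have Z1: "Z1 > 0" unfolding Z1_def by (rule const_pos[OF a1])
  have Z2: "Z2 > 0" unfolding Z2_def by (rule const_pos[OF a2])
  have Zm: "Zm > 0" unfolding Zm_def by (rule const_pos[OF am])
  have Wpos: "W > 0" unfolding W_def
    by (rule integral_pos[OF kk_integrable[OF a1 a2]]) (simp add: kernel_pos)
  have mpos: "m > 0" unfolding m_def by simp
  define c where "c = m * W * Zm / (Z1 * Z2)"
  define C where "C = C0 * Zm / (Z1 * Z2)"
  have c: "c > 0" unfolding c_def using mpos Wpos Zm Z1 Z2 by simp
  have cd: "cauchy_density (min a1 a2) x = cauchy_kernel (min a1 a2) x / Zm" for x :: 'a
    unfolding cauchy_density_def Zm_def ..
  have cv: "convolution (cauchy_density a1) (cauchy_density a2) x = (\<integral>y. cauchy_kernel a1 (x - y) * cauchy_kernel a2 y \<partial>lborel) / (Z1 * Z2)" for x :: 'a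
    unfolding Z1_def Z2_def by (rule conv_eq)
  show ?thesis
  proof (intro exI conjI allI)
    show "0 < c" by (rule c)
    fix x :: 'a
    have lo: "m * W * cauchy_kernel (min a1 a2) x \<le> (\<integral>y. cauchy_kernel a1 (x - y) * cauchy_kernel a2 y \<partial>lborel)"
      using I_lower[OF a1 a2, of x] unfolding m_def W_def .
    have up: "(\<integral>y. cauchy_kernel a1 (x - y) * cauchy_kernel a2 y \<partial>lborel) \<le> C0 * cauchy_kernel (min a1 a2) x"
      using I_upper[OF a1 a2, of x] unfolding C0_def Z1_def Z2_def .
    have "c * cauchy_density (min a1 a2) x = m * W * cauchy_kernel (min a1 a2) x / (Z1 * Z2)"
      unfolding cd c_def using Zm by simp
    also have "\<dots> \<le> convolution (cauchy_density a1) (cauchy_density a2) x"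
      unfolding cv using lo Z1 Z2 by (simp add: divide_right_mono)
    finally show "c * cauchy_density (min a1 a2) x \<le> convolution (cauchy_density a1) (cauchy_density a2) x" .
    have "convolution (cauchy_density a1) (cauchy_density a2) x \<le> C0 * cauchy_kernel (min a1 a2) x / (Z1 * Z2)"
      unfolding cv using up Z1 Z2 by (simp add: divide_right_mono)
    also have "\<dots> = C * cauchy_density (min a1 a2) x"
      unfolding cd C_def using Zm by simp
    finally show "convolution (cauchy_density a1) (cauchy_density a2) x \<le> C * cauchy_density (min a1 a2) x" .
  qed
qed

theorem mainTheorem12:
  fixes \<alpha>1 \<alpha>2 :: real
  assumes "0 < \<alpha>1" and "0 < \<alpha>2"
  shows "\<exists>c C. 0 < c \<and> c \<le> C \<and>
    (\<forall>x::'a::euclidean_space.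
        c * cauchy_density (min \<alpha>1 \<alpha>2) x \<le> convolution (cauchy_density \<alpha>1) (cauchy_density \<alpha>2) x
      \<and> convolution (cauchy_density \<alpha>1) (cauchy_density \<alpha>2) x \<le> C * cauchy_density (min \<alpha>1 \<alpha>2) x) \<and>
    (\<forall>(w::'a \<Rightarrow> real) K. weighted_poincare (cauchy_density (min \<alpha>1 \<alpha>2)) w K \<longrightarrow>
        weighted_poincare (convolution (cauchy_density \<alpha>1) (cauchy_density \<alpha>2)) w ((C / c) * K))"
proof -
  obtain c C where c: "0 < c" and b: "\<forall>x::'a.
        c * cauchy_density (min \<alpha>1 \<alpha>2) x \<le> convolution (cauchy_density \<alpha>1) (cauchy_density \<alpha>2) x
      \<and> convolution (cauchy_density \<alpha>1) (cauchy_density \<alpha>2) x \<le> C * cauchy_density (min \<alpha>1 \<alpha>2) x"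
    using conv_bounds[OF assms] by blast
  have am: "min \<alpha>1 \<alpha>2 > 0" using assms by simp
  have d0: "0 < cauchy_density (min \<alpha>1 \<alpha>2) (0::'a)" by (rule dens_pos[OF am])
  have "c * cauchy_density (min \<alpha>1 \<alpha>2) (0::'a) \<le> C * cauchy_density (min \<alpha>1 \<alpha>2) (0::'a)"
    using b[rule_format, of 0] by linarith
  then have cC: "c \<le> C" using d0 by simp
  have wpall: "\<forall>(w::'a \<Rightarrow> real) K. weighted_poincare (cauchy_density (min \<alpha>1 \<alpha>2)) w K \<longrightarrow>
        weighted_poincare (convolution (cauchy_density \<alpha>1) (cauchy_density \<alpha>2)) w ((C / c) * K)"
  proof (intro allI impI)
    fix w :: "'a \<Rightarrow> real" and K
    assume wp: "weighted_poincare (cauchy_density (min \<alpha>1 \<alpha>2)) w K"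
    show "weighted_poincare (convolution (cauchy_density \<alpha>1) (cauchy_density \<alpha>2)) w ((C / c) * K)"
      by (rule wp_transfer[OF conv_meas dens_meas less_imp_le[OF dens_pos[OF am]] c cC _ _ conv_nn_one[OF assms] wp])
         (use b in auto)
  qed
  show ?thesis using c cC b wpall by blast
qed

end
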